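(* Fix $\varepsilon\in\{1,-1\}$, $m\in\{1,2,5,7,8,10,11,13,14,16,17,19,22,23\}$, and a nonnegative integer $n$ with $\delta_m(n)$ squarefree. Let $\ell$ be a prime of bad reduction for $E_{m,n}$. Then $E_{m,n}$ has multiplicative reduction at $\ell$, and: (i) if $\ell=2$, the reduction is split; (ii) if $\ell\mid m+24n$, the reduction is split; (iii) if $\ell\mid f_m(n)$, the reduction is split when $\ell\equiv1\pmod3$ and nonsplit when $\ell\equiv2\pmod3$.
   Context: Let $f_m(n)=62208n^2+(5184m-432\varepsilon)n+(108m^2-18\varepsilon m+1)$; $i=1$ if $m$ odd, $i=2$ if $m$ even and $m\ne8,16$, $i=4$ if $m\in\{8,16\}$; $\delta_m(n)=2^{1-i}(m+24n)f_m(n)$. Put $A=18(m+24n)-\varepsilon$, $B=4\varepsilon/9$, $D=-3$, $r=1/3+A^2$, $H(m,n)=\frac1{16}(2ABD+2A^2Dr+3r^2)$, $J(m,n)=\frac1{64}(B^2D+2ABDr+A^2Dr^2+r^3)$ (integers), and $E_{m,n}:y^2+xy=x^3+H(m,n)x+J(m,n)$. *)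

theory Defs
  imports "HOL-Computational_Algebra.Computational_Algebra" "HOL-Number_Theory.Number_Theory"
begin

section \<open>Weierstrass models y^2 + a1 xy + a3 y = x^3 + a2 x^2 + a4 x + a6\<close>

type_synonym 'a wm = "'a \<times> 'a \<times> 'a \<times> 'a \<times> 'a"

fun wm_map :: "('a \<Rightarrow> 'b) \<Rightarrow> 'a wm \<Rightarrow> 'b wm" where
  "wm_map f (a1,a2,a3,a4,a6) = (f a1, f a2, f a3, f a4, f a6)"

fun wm_b2 :: "'a::comm_ring_1 wm \<Rightarrow> 'a" where
  "wm_b2 (a1,a2,a3,a4,a6) = a1^2 + 4*a2"
fun wm_b4 :: "'a::comm_ring_1 wm \<Rightarrow> 'a" where
  "wm_b4 (a1,a2,a3,a4,a6) = 2*a4 + a1*a3"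
fun wm_b6 :: "'a::comm_ring_1 wm \<Rightarrow> 'a" where
  "wm_b6 (a1,a2,a3,a4,a6) = a3^2 + 4*a6"
fun wm_b8 :: "'a::comm_ring_1 wm \<Rightarrow> 'a" where
  "wm_b8 (a1,a2,a3,a4,a6) = a1^2*a6 + 4*a2*a6 - a1*a3*a4 + a2*a3^2 - a4^2"

definition wm_c4 :: "'a::comm_ring_1 wm \<Rightarrow> 'a" where
  "wm_c4 E = (wm_b2 E)^2 - 24 * wm_b4 E"

definition wm_disc :: "'a::comm_ring_1 wm \<Rightarrow> 'a" where
  "wm_disc E = - ((wm_b2 E)^2 * wm_b8 E) - 8 * (wm_b4 E)^3 - 27 * (wm_b6 E)^2
               + 9 * wm_b2 E * wm_b4 E * wm_b6 E"

text \<open>Isomorphism over Q (Silverman, Table 3.1): E' is obtained from E by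
  x = u^2 x' + r, y = u^3 y' + s u^2 x' + t with u,r,s,t rational, u nonzero.\<close>
fun wm_iso :: "rat wm \<Rightarrow> rat wm \<Rightarrow> bool" where
  "wm_iso (a1,a2,a3,a4,a6) (b1,b2,b3,b4,b6) =
    (\<exists>u r s t. u \<noteq> 0 \<and>
       u * b1 = a1 + 2*s \<and>
       u^2 * b2 = a2 - s*a1 + 3*r - s^2 \<and>
       u^3 * b3 = a3 + r*a1 + 2*t \<and>
       u^4 * b4 = a4 - s*a3 + 2*r*a2 - (t + r*s)*a1 + 3*r^2 - 2*s*t \<and>
       u^6 * b6 = a6 + r*a4 + r^2*a2 + r^3 - t*a3 - t^2 - r*t*a1)"

definition minimal_model_at :: "nat \<Rightarrow> rat wm \<Rightarrow> int wm \<Rightarrow> bool" where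
  "minimal_model_at l E M \<longleftrightarrow>
     wm_iso E (wm_map of_int M) \<and>
     (\<forall>M'. wm_iso E (wm_map of_int M') \<longrightarrow>
        multiplicity (int l) (wm_disc M) \<le> multiplicity (int l) (wm_disc M'))"

definition bad_reduction :: "nat \<Rightarrow> rat wm \<Rightarrow> bool" where
  "bad_reduction l E \<longleftrightarrow> (\<exists>M. minimal_model_at l E M \<and> int l dvd wm_disc M)"

definition multiplicative_reduction :: "nat \<Rightarrow> rat wm \<Rightarrow> bool" where
  "multiplicative_reduction l E \<longleftrightarrow>
     (\<exists>M. minimal_model_at l E M \<and> int l dvd wm_disc M \<and> \<not> int l dvd wm_c4 M)"

fun singular_point_mod :: "nat \<Rightarrow> int wm \<Rightarrow> int \<Rightarrow> int \<Rightarrow> bool" where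
  "singular_point_mod l (a1,a2,a3,a4,a6) x y \<longleftrightarrow>
     [y^2 + a1*x*y + a3*y - x^3 - a2*x^2 - a4*x - a6 = 0] (mod int l) \<and>
     [a1*y - 3*x^2 - 2*a2*x - a4 = 0] (mod int l) \<and>
     [2*y + a1*x + a3 = 0] (mod int l)"

text \<open>The tangent cone at the singular point (x0,y0) is Y^2 + a1 XY - (3 x0 + a2) X^2;
  the tangent lines are defined over F_l iff T^2 + a1 T - (3 x0 + a2) has a root mod l.\<close>
fun rational_tangents_mod :: "nat \<Rightarrow> int wm \<Rightarrow> int \<Rightarrow> bool" where
  "rational_tangents_mod l (a1,a2,a3,a4,a6) x0 \<longleftrightarrow>
     (\<exists>T. [T^2 + a1*T - (3*x0 + a2) = 0] (mod int l))"

definition split_multiplicative_reduction :: "nat \<Rightarrow> rat wm \<Rightarrow> bool" where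
  "split_multiplicative_reduction l E \<longleftrightarrow>
     (\<exists>M x0 y0. minimal_model_at l E M \<and> int l dvd wm_disc M \<and> \<not> int l dvd wm_c4 M \<and>
        singular_point_mod l M x0 y0 \<and> rational_tangents_mod l M x0)"

definition nonsplit_multiplicative_reduction :: "nat \<Rightarrow> rat wm \<Rightarrow> bool" where
  "nonsplit_multiplicative_reduction l E \<longleftrightarrow>
     (\<exists>M x0 y0. minimal_model_at l E M \<and> int l dvd wm_disc M \<and> \<not> int l dvd wm_c4 M \<and>
        singular_point_mod l M x0 y0 \<and> \<not> rational_tangents_mod l M x0)"

definition f_m :: "int \<Rightarrow> int \<Rightarrow> int \<Rightarrow> int" where
  "f_m \<epsilon> m n = 62208*n^2 + (5184*m - 432*\<epsilon>)*n + (108*m^2 - 18*\<epsilon>*m + 1)"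

definition i_m :: "int \<Rightarrow> nat" where
  "i_m m = (if odd m then 1 else if m \<in> {8,16} then 4 else 2)"

definition delta_m :: "int \<Rightarrow> int \<Rightarrow> int \<Rightarrow> int" where
  "delta_m \<epsilon> m n = ((m + 24*n) * f_m \<epsilon> m n) div 2^(i_m m - 1)"

definition A_mn :: "int \<Rightarrow> int \<Rightarrow> int \<Rightarrow> rat" where
  "A_mn \<epsilon> m n = of_int (18*(m + 24*n) - \<epsilon>)"
definition B_e :: "int \<Rightarrow> rat" where
  "B_e \<epsilon> = 4 * of_int \<epsilon> / 9"
definition D_c :: rat where "D_c = -3"
definition r_mn :: "int \<Rightarrow> int \<Rightarrow> int \<Rightarrow> rat" where
  "r_mn \<epsilon> m n = 1/3 + (A_mn \<epsilon> m n)^2"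

definition H_mn :: "int \<Rightarrow> int \<Rightarrow> int \<Rightarrow> rat" where
  "H_mn \<epsilon> m n = (let A = A_mn \<epsilon> m n; B = B_e \<epsilon>; D = D_c; r = r_mn \<epsilon> m n in
     (2*A*B*D + 2*A^2*D*r + 3*r^2) / 16)"
definition J_mn :: "int \<Rightarrow> int \<Rightarrow> int \<Rightarrow> rat" where
  "J_mn \<epsilon> m n = (let A = A_mn \<epsilon> m n; B = B_e \<epsilon>; D = D_c; r = r_mn \<epsilon> m n in
     (B^2*D + 2*A*B*D*r + A^2*D*r^2 + r^3) / 64)"

definition E_mn :: "int \<Rightarrow> int \<Rightarrow> int \<Rightarrow> rat wm" where
  "E_mn \<epsilon> m n = (1, 0, 0, H_mn \<epsilon> m n, J_mn \<epsilon> m n)"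

end

theory Submission imports Defs begin
section \<open>Invariants under change of variables\<close>

lemma disc_scale: fixes u b1 b2 b3 b4 b6 :: "rat"
  shows "u^12 * wm_disc (b1,b2,b3,b4,b6) = wm_disc (u*b1, u^2*b2, u^3*b3, u^4*b4, u^6*b6)"
  by (simp add: wm_disc_def eval_nat_numeral algebra_simps)
lemma c4_scale: fixes u b1 b2 b3 b4 b6 :: "rat"
  shows "u^4 * wm_c4 (b1,b2,b3,b4,b6) = wm_c4 (u*b1, u^2*b2, u^3*b3, u^4*b4, u^6*b6)"
  by (simp add: wm_c4_def eval_nat_numeral algebra_simps)
lemma c4_change: fixes a1 a2 a3 a4 a6 r s t :: "rat"
  shows "wm_c4 (a1 + 2*s, a2 - s*a1 + 3*r - s^2, a3 + r*a1 + 2*t, a4 - s*a3 + 2*r*a2 - (t + r*s)*a1 + 3*r^2 - 2*s*t,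
    a6 + r*a4 + r^2*a2 + r^3 - t*a3 - t^2 - r*t*a1) = wm_c4 (a1,a2,a3,a4,a6)"
  by (simp add: wm_c4_def eval_nat_numeral algebra_simps)
lemma disc_change: fixes a1 a2 a3 a4 a6 r s t :: "rat"
  shows "wm_disc (a1 + 2*s, a2 - s*a1 + 3*r - s^2, a3 + r*a1 + 2*t, a4 - s*a3 + 2*r*a2 - (t + r*s)*a1 + 3*r^2 - 2*s*t,
    a6 + r*a4 + r^2*a2 + r^3 - t*a3 - t^2 - r*t*a1) = wm_disc (a1,a2,a3,a4,a6)"
  by (simp add: wm_disc_def eval_nat_numeral algebra_simps)

lemma iso_inv0:
  assumes "wm_iso (a1,a2,a3,a4,a6) (b1,b2,b3,b4,b6)"
  shows "\<exists>u. u \<noteq> 0 \<and> u^12 * wm_disc (b1,b2,b3,b4,b6) = wm_disc (a1,a2,a3,a4,a6)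
             \<and> u^4 * wm_c4 (b1,b2,b3,b4,b6) = wm_c4 (a1,a2,a3,a4,a6)"
proof -
  from assms obtain u r s t where u: "u \<noteq> 0" and
    e1: "u * b1 = a1 + 2*s" and
    e2: "u^2 * b2 = a2 - s*a1 + 3*r - s^2" and
    e3: "u^3 * b3 = a3 + r*a1 + 2*t" and
    e4: "u^4 * b4 = a4 - s*a3 + 2*r*a2 - (t + r*s)*a1 + 3*r^2 - 2*s*t" and
    e6: "u^6 * b6 = a6 + r*a4 + r^2*a2 + r^3 - t*a3 - t^2 - r*t*a1" by auto
  have "u^12 * wm_disc (b1,b2,b3,b4,b6) = wm_disc (u*b1, u^2*b2, u^3*b3, u^4*b4, u^6*b6)"
    by (rule disc_scale)
  also have "\<dots> = wm_disc (a1,a2,a3,a4,a6)" unfolding e1 e2 e3 e4 e6 by (rule disc_change)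
  finally have D: "u^12 * wm_disc (b1,b2,b3,b4,b6) = wm_disc (a1,a2,a3,a4,a6)" .
  have "u^4 * wm_c4 (b1,b2,b3,b4,b6) = wm_c4 (u*b1, u^2*b2, u^3*b3, u^4*b4, u^6*b6)"
    by (rule c4_scale)
  also have "\<dots> = wm_c4 (a1,a2,a3,a4,a6)" unfolding e1 e2 e3 e4 e6 by (rule c4_change)
  finally show ?thesis using D u by blast
qed

lemma iso_inv:
  assumes "wm_iso E E'"
  shows "\<exists>u. u \<noteq> 0 \<and> u^12 * wm_disc E' = wm_disc E \<and> u^4 * wm_c4 E' = wm_c4 E"
  using assms iso_inv0 by (cases E; cases E') blast

lemma iso_refl: "wm_iso E E"
proof (cases E)
  case (fields a1 a2 a3 a4 a6)
  show ?thesis unfolding fields wm_iso.simps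
    by (rule exI[of _ 1], rule exI[of _ 0], rule exI[of _ 0], rule exI[of _ 0]) simp
qed

lemma disc_map: "wm_disc (wm_map (of_int::int\<Rightarrow>rat) M) = of_int (wm_disc M)"
  by (cases M) (simp add: wm_disc_def)
lemma c4_map: "wm_c4 (wm_map (of_int::int\<Rightarrow>rat) M) = of_int (wm_c4 M)"
  by (cases M) (simp add: wm_c4_def)

lemma minimal_of:
  fixes l :: nat and M :: "int wm"
  assumes l: "prime l" and EM: "E = wm_map of_int M" and c: "\<not> int l dvd wm_c4 M"
    and d: "wm_disc M \<noteq> 0"
  shows "minimal_model_at l E M"
  unfolding minimal_model_at_def
proof (intro conjI allI impI)
  show "wm_iso E (wm_map of_int M)" unfolding EM by (rule iso_refl)
  fix M' assume iso: "wm_iso E (wm_map of_int M')"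
  obtain u where u0: "u \<noteq> 0" and ud: "u^12 * of_int (wm_disc M') = (of_int (wm_disc M) :: rat)"
    and uc: "u^4 * of_int (wm_c4 M') = (of_int (wm_c4 M) :: rat)"
    using iso_inv[OF iso] unfolding EM disc_map c4_map by blast
  obtain a b where ab: "quotient_of u = (a,b)" by (cases "quotient_of u")
  have u_eq: "u = of_int a / of_int b" and b0: "b > 0" and cop: "coprime a b"
    using quotient_of_div[OF ab] quotient_of_denom_pos[OF ab] quotient_of_coprime[OF ab] by auto
  have a0: "a \<noteq> 0" using u0 u_eq by auto
  have C: "a^4 * wm_c4 M' = b^4 * wm_c4 M"
  proof -
    from uc have "(of_int a / of_int b)^4 * of_int (wm_c4 M') = (of_int (wm_c4 M) :: rat)"
      using u_eq by simp
    hence "of_int a^4 * of_int (wm_c4 M') = of_int b^4 * (of_int (wm_c4 M)::rat)" using b0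
      by (simp add: field_simps power_divide)
    hence "(of_int (a^4 * wm_c4 M') :: rat) = of_int (b^4 * wm_c4 M)" by simp
    thus ?thesis by (simp only: of_int_eq_iff)
  qed
  have D: "a^12 * wm_disc M' = b^12 * wm_disc M"
  proof -
    from ud have "(of_int a / of_int b)^12 * of_int (wm_disc M') = (of_int (wm_disc M) :: rat)"
      using u_eq by simp
    hence "of_int a^12 * of_int (wm_disc M') = of_int b^12 * (of_int (wm_disc M)::rat)" using b0
      by (simp add: field_simps power_divide)
    hence "(of_int (a^12 * wm_disc M') :: rat) = of_int (b^12 * wm_disc M)" by simp
    thus ?thesis by (simp only: of_int_eq_iff)
  qed
  have pl: "prime (int l)" using l by simp
  have la: "\<not> int l dvd a"
  proof
    assume la: "int l dvd a"
    have lb: "\<not> int l dvd b"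
    proof
      assume "int l dvd b"
      hence "is_unit (int l)" using coprime_common_divisor[OF cop la] by blast
      thus False using pl not_prime_unit by blast
    qed
    have "int l dvd a^4" by (rule dvd_trans[OF la]) simp
    hence "int l dvd a^4 * wm_c4 M'" by (rule dvd_mult2)
    hence "int l dvd b^4 * wm_c4 M" using C by simp
    hence "int l dvd b^4 \<or> int l dvd wm_c4 M" using pl prime_dvd_mult_iff by blast
    moreover have "\<not> int l dvd b^4" using lb prime_dvd_power[OF pl] by blast
    ultimately show False using c by blast
  qed
  have pe: "prime_elem (int l)" using pl by (rule prime_imp_prime_elem)
  have b12: "b^12 \<noteq> 0" using b0 by simp
  have a12: "a^12 \<noteq> 0" using a0 by simp
  have d': "wm_disc M' \<noteq> 0" using D b12 d a12 by auto
  have "multiplicity (int l) (wm_disc M) \<le> multiplicity (int l) (b^12) + multiplicity (int l) (wm_disc M)"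
    by simp
  also have "\<dots> = multiplicity (int l) (b^12 * wm_disc M)"
    using prime_elem_multiplicity_mult_distrib[OF pe b12 d] by simp
  also have "\<dots> = multiplicity (int l) (a^12 * wm_disc M')" using D by simp
  also have "\<dots> = multiplicity (int l) (a^12) + multiplicity (int l) (wm_disc M')"
    using prime_elem_multiplicity_mult_distrib[OF pe a12 d'] by simp
  also have "multiplicity (int l) (a^12) = 0"
    using prime_elem_multiplicity_power_distrib[OF pe a0, of 12] not_dvd_imp_multiplicity_0[OF la] by simp
  finally show "multiplicity (int l) (wm_disc M) \<le> multiplicity (int l) (wm_disc M')" by simp
qed
section \<open>The explicit model\<close>

definition AA :: "int \<Rightarrow> int \<Rightarrow> int" where "AA e N = 18*N - e"
definition Hh :: "int \<Rightarrow> int \<Rightarrow> int" where "Hh e N = -(9*(AA e N)^4 + 8*e*(AA e N) - 1)"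
definition Jj :: "int \<Rightarrow> int \<Rightarrow> int" where
  "Jj e N = -(54*(AA e N)^6 + 27*(AA e N)^4 + 72*e*(AA e N)^3 + 24*e*(AA e N) + 15)"
lemma hj_p_0:
  fixes q N :: int assumes N: "N = 4*q + 0"
  shows "\<exists>h j. 48*h = Hh (1) N \<and> 1728*j = Jj (1) N \<and> even (h - j)"
proof -
  have a: "48 * (42*q - 5832*q^2 + 279936*q^3 - 5038848*q^4) = Hh (1) N" unfolding N by (simp add: Hh_def AA_def eval_nat_numeral algebra_simps)
  have b: "1728 * (8*q - 2268*q^2 + 241056*q^3 - 13017024*q^4 + 362797056*q^5 - 4353564672*q^6) = Jj (1) N" unfolding N by (simp add: Jj_def AA_def eval_nat_numeral algebra_simps)
  have c: "(42*q - 5832*q^2 + 279936*q^3 - 5038848*q^4) - (8*q - 2268*q^2 + 241056*q^3 - 13017024*q^4 + 362797056*q^5 - 4353564672*q^6) = 2 * (17*q - 1782*q^2 + 19440*q^3 + 3989088*q^4 - 181398528*q^5 + 2176782336*q^6)" by (simp add: algebra_simps)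
  have "even ((42*q - 5832*q^2 + 279936*q^3 - 5038848*q^4) - (8*q - 2268*q^2 + 241056*q^3 - 13017024*q^4 + 362797056*q^5 - 4353564672*q^6))" unfolding c by simp
  with a b show ?thesis by blast
qed

lemma hj_p_1:
  fixes q N :: int assumes N: "N = 4*q + 1"
  shows "\<exists>h j. 48*h = Hh (1) N \<and> 1728*j = Jj (1) N \<and> even (h - j)"
proof -
  have a: "48 * (-15663 - 265314*q - 1685448*q^2 - 4758912*q^3 - 5038848*q^4) = Hh (1) N" unfolding N by (simp add: Hh_def AA_def eval_nat_numeral algebra_simps)
  have b: "1728 * (-755809 - 19192780*q - 203107500*q^2 - 1146516768*q^3 - 3640987584*q^4 - 6167549952*q^5 - 4353564672*q^6) = Jj (1) N" unfolding N by (simp add: Jj_def AA_def eval_nat_numeral algebra_simps)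
  have c: "(-15663 - 265314*q - 1685448*q^2 - 4758912*q^3 - 5038848*q^4) - (-755809 - 19192780*q - 203107500*q^2 - 1146516768*q^3 - 3640987584*q^4 - 6167549952*q^5 - 4353564672*q^6) = 2 * (370073 + 9463733*q + 100711026*q^2 + 570878928*q^3 + 1817974368*q^4 + 3083774976*q^5 + 2176782336*q^6)" by (simp add: algebra_simps)
  have "even ((-15663 - 265314*q - 1685448*q^2 - 4758912*q^3 - 5038848*q^4) - (-755809 - 19192780*q - 203107500*q^2 - 1146516768*q^3 - 3640987584*q^4 - 6167549952*q^5 - 4353564672*q^6))" unfolding c by simp
  with a b show ?thesis by blast
qed

lemma hj_p_2:
  fixes q N :: int assumes N: "N = 4*q + 2"
  shows "\<exists>h j. 48*h = Hh (1) N \<and> 1728*j = Jj (1) N \<and> even (h - j)"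
proof -
  have a: "48 * (-281373 - 2315262*q - 7144200*q^2 - 9797760*q^3 - 5038848*q^4) = Hh (1) N" unfolding N by (simp add: Hh_def AA_def eval_nat_numeral algebra_simps)
  have b: "1728 * (-57471035 - 709249276*q - 3647136780*q^2 - 10002712032*q^3 - 15431891904*q^4 - 12697896960*q^5 - 4353564672*q^6) = Jj (1) N" unfolding N by (simp add: Jj_def AA_def eval_nat_numeral algebra_simps)
  have c: "(-281373 - 2315262*q - 7144200*q^2 - 9797760*q^3 - 5038848*q^4) - (-57471035 - 709249276*q - 3647136780*q^2 - 10002712032*q^3 - 15431891904*q^4 - 12697896960*q^5 - 4353564672*q^6) = 2 * (28594831 + 353467007*q + 1819996290*q^2 + 4996457136*q^3 + 7713426528*q^4 + 6348948480*q^5 + 2176782336*q^6)" by (simp add: algebra_simps)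
  have "even ((-281373 - 2315262*q - 7144200*q^2 - 9797760*q^3 - 5038848*q^4) - (-57471035 - 709249276*q - 3647136780*q^2 - 10002712032*q^3 - 15431891904*q^4 - 12697896960*q^5 - 4353564672*q^6))" unfolding c by simp
  with a b show ?thesis by blast
qed

lemma hj_p_3:
  fixes q N :: int assumes N: "N = 4*q + 3"
  shows "\<exists>h j. 48*h = Hh (1) N \<and> 1728*j = Jj (1) N \<and> even (h - j)"
proof -
  have a: "48 * (-1479474 - 8039370*q - 16382088*q^2 - 14836608*q^3 - 5038848*q^4) = Hh (1) N" unfolding N by (simp add: Hh_def AA_def eval_nat_numeral algebra_simps)
  have b: "1728 * (-692765778 - 5646334384*q - 19175268348*q^2 - 34731278496*q^3 - 35385729984*q^4 - 19228243968*q^5 - 4353564672*q^6) = Jj (1) N" unfolding N by (simp add: Jj_def AA_def eval_nat_numeral algebra_simps)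
  have c: "(-1479474 - 8039370*q - 16382088*q^2 - 14836608*q^3 - 5038848*q^4) - (-692765778 - 5646334384*q - 19175268348*q^2 - 34731278496*q^3 - 35385729984*q^4 - 19228243968*q^5 - 4353564672*q^6) = 2 * (345643152 + 2819147507*q + 9579443130*q^2 + 17358220944*q^3 + 17690345568*q^4 + 9614121984*q^5 + 2176782336*q^6)" by (simp add: algebra_simps)
  have "even ((-1479474 - 8039370*q - 16382088*q^2 - 14836608*q^3 - 5038848*q^4) - (-692765778 - 5646334384*q - 19175268348*q^2 - 34731278496*q^3 - 35385729984*q^4 - 19228243968*q^5 - 4353564672*q^6))" unfolding c by simp
  with a b show ?thesis by blast
qed

lemma hj_m_0:
  fixes q N :: int assumes N: "N = 4*q + 0"
  shows "\<exists>h j. 48*h = Hh (-1) N \<and> 1728*j = Jj (-1) N \<and> even (h - j)"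
proof -
  have a: "48 * (-42*q - 5832*q^2 - 279936*q^3 - 5038848*q^4) = Hh (-1) N" unfolding N by (simp add: Hh_def AA_def eval_nat_numeral algebra_simps)
  have b: "1728 * (-8*q - 2268*q^2 - 241056*q^3 - 13017024*q^4 - 362797056*q^5 - 4353564672*q^6) = Jj (-1) N" unfolding N by (simp add: Jj_def AA_def eval_nat_numeral algebra_simps)
  have c: "(-42*q - 5832*q^2 - 279936*q^3 - 5038848*q^4) - (-8*q - 2268*q^2 - 241056*q^3 - 13017024*q^4 - 362797056*q^5 - 4353564672*q^6) = 2 * (-17*q - 1782*q^2 - 19440*q^3 + 3989088*q^4 + 181398528*q^5 + 2176782336*q^6)" by (simp add: algebra_simps)
  have "even ((-42*q - 5832*q^2 - 279936*q^3 - 5038848*q^4) - (-8*q - 2268*q^2 - 241056*q^3 - 13017024*q^4 - 362797056*q^5 - 4353564672*q^6))" unfolding c by simp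
  with a b show ?thesis by blast
qed

lemma hj_m_1:
  fixes q N :: int assumes N: "N = 4*q + 1"
  shows "\<exists>h j. 48*h = Hh (-1) N \<and> 1728*j = Jj (-1) N \<and> even (h - j)"
proof -
  have a: "48 * (-24432 - 370374*q - 2105352*q^2 - 5318784*q^3 - 5038848*q^4) = Hh (-1) N" unfolding N by (simp add: Hh_def AA_def eval_nat_numeral algebra_simps)
  have b: "1728 * (-1471934 - 33454952*q - 316843164*q^2 - 1600495200*q^3 - 4547980224*q^4 - 6893144064*q^5 - 4353564672*q^6) = Jj (-1) N" unfolding N by (simp add: Jj_def AA_def eval_nat_numeral algebra_simps)
  have c: "(-24432 - 370374*q - 2105352*q^2 - 5318784*q^3 - 5038848*q^4) - (-1471934 - 33454952*q - 316843164*q^2 - 1600495200*q^3 - 4547980224*q^4 - 6893144064*q^5 - 4353564672*q^6) = 2 * (723751 + 16542289*q + 157368906*q^2 + 797588208*q^3 + 2271470688*q^4 + 3446572032*q^5 + 2176782336*q^6)" by (simp add: algebra_simps)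
  have "even ((-24432 - 370374*q - 2105352*q^2 - 5318784*q^3 - 5038848*q^4) - (-1471934 - 33454952*q - 316843164*q^2 - 1600495200*q^3 - 4547980224*q^4 - 6893144064*q^5 - 4353564672*q^6))" unfolding c by simp
  with a b show ?thesis by blast
qed

lemma hj_m_2:
  fixes q N :: int assumes N: "N = 4*q + 2"
  shows "\<exists>h j. 48*h = Hh (-1) N \<and> 1728*j = Jj (-1) N \<and> even (h - j)"
proof -
  have a: "48 * (-351399 - 2735250*q - 7984008*q^2 - 10357632*q^3 - 5038848*q^4) = Hh (-1) N" unfolding N by (simp add: Hh_def AA_def eval_nat_numeral algebra_simps)
  have b: "1728 * (-80206123 - 936359036*q - 4554852588*q^2 - 11817179424*q^3 - 17245877184*q^4 - 13423491072*q^5 - 4353564672*q^6) = Jj (-1) N" unfolding N by (simp add: Jj_def AA_def eval_nat_numeral algebra_simps)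
  have c: "(-351399 - 2735250*q - 7984008*q^2 - 10357632*q^3 - 5038848*q^4) - (-80206123 - 936359036*q - 4554852588*q^2 - 11817179424*q^3 - 17245877184*q^4 - 13423491072*q^5 - 4353564672*q^6) = 2 * (39927362 + 466811893*q + 2273434290*q^2 + 5903410896*q^3 + 8620419168*q^4 + 6711745536*q^5 + 2176782336*q^6)" by (simp add: algebra_simps)
  have "even ((-351399 - 2735250*q - 7984008*q^2 - 10357632*q^3 - 5038848*q^4) - (-80206123 - 936359036*q - 4554852588*q^2 - 11817179424*q^3 - 17245877184*q^4 - 13423491072*q^5 - 4353564672*q^6))" unfolding c by simp
  with a b show ?thesis by blast
qed

lemma hj_m_3:
  fixes q N :: int assumes N: "N = 4*q + 3"
  shows "\<exists>h j. 48*h = Hh (-1) N \<and> 1728*j = Jj (-1) N \<and> even (h - j)"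
proof -
  have a: "48 * (-1715733 - 8984238*q - 17641800*q^2 - 15396480*q^3 - 5038848*q^4) = Hh (-1) N" unfolding N by (simp add: Hh_def AA_def eval_nat_numeral algebra_simps)
  have b: "1728 * (-865156065 - 6795060524*q - 22237453260*q^2 - 38813227488*q^3 - 38106707904*q^4 - 19953838080*q^5 - 4353564672*q^6) = Jj (-1) N" unfolding N by (simp add: Jj_def AA_def eval_nat_numeral algebra_simps)
  have c: "(-1715733 - 8984238*q - 17641800*q^2 - 15396480*q^3 - 5038848*q^4) - (-865156065 - 6795060524*q - 22237453260*q^2 - 38813227488*q^3 - 38106707904*q^4 - 19953838080*q^5 - 4353564672*q^6) = 2 * (431720166 + 3393038143*q + 11109905730*q^2 + 19398915504*q^3 + 19050834528*q^4 + 9976919040*q^5 + 2176782336*q^6)" by (simp add: algebra_simps)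
  have "even ((-1715733 - 8984238*q - 17641800*q^2 - 15396480*q^3 - 5038848*q^4) - (-865156065 - 6795060524*q - 22237453260*q^2 - 38813227488*q^3 - 38106707904*q^4 - 19953838080*q^5 - 4353564672*q^6))" unfolding c by simp
  with a b show ?thesis by blast
qed

lemma disc_A_p: fixes A :: int
  shows "1296*((1 - 8*A - 9*A^4))^2 - 1728*(-15 - 24*A - 72*A^3 - 27*A^4 - 54*A^6) - 1728*((1 - 8*A - 9*A^4))^3 - 432*((-15 - 24*A - 72*A^3 - 27*A^4 - 54*A^6))^2 + 2592*((1 - 8*A - 9*A^4))*((-15 - 24*A - 72*A^3 - 27*A^4 - 54*A^6)) = -110592*(1*A^3 + 1)"
proof -
  have x2: "((1 - 8*A - 9*A^4))^2 = (1 - 16*A + 64*A^2 - 18*A^4 + 144*A^5 + 81*A^8)" by (simp add: eval_nat_numeral algebra_simps)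
  have x3: "((1 - 8*A - 9*A^4))^3 = (1 - 16*A + 64*A^2 - 18*A^4 + 144*A^5 + 81*A^8) * ((1 - 8*A - 9*A^4))" by (simp add: eval_nat_numeral algebra_simps)
  have x3': "(1 - 16*A + 64*A^2 - 18*A^4 + 144*A^5 + 81*A^8) * ((1 - 8*A - 9*A^4)) = (1 - 24*A + 192*A^2 - 512*A^3 - 27*A^4 + 432*A^5 - 1728*A^6 + 243*A^8 - 1944*A^9 - 729*A^12)" by (simp add: eval_nat_numeral algebra_simps)
  have y2: "((-15 - 24*A - 72*A^3 - 27*A^4 - 54*A^6))^2 = (225 + 720*A + 576*A^2 + 2160*A^3 + 4266*A^4 + 1296*A^5 + 6804*A^6 + 6480*A^7 + 729*A^8 + 7776*A^9 + 2916*A^10 + 2916*A^12)" by (simp add: eval_nat_numeral algebra_simps)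
  have xy: "((1 - 8*A - 9*A^4))*((-15 - 24*A - 72*A^3 - 27*A^4 - 54*A^6)) = (-15 + 96*A + 192*A^2 - 72*A^3 + 684*A^4 + 432*A^5 - 54*A^6 + 1080*A^7 + 243*A^8 + 486*A^10)" by (simp add: eval_nat_numeral algebra_simps)
  show ?thesis unfolding x2 x3 x3' y2 xy by (simp add: eval_nat_numeral algebra_simps)
qed

lemma disc_A_m: fixes A :: int
  shows "1296*((1 + 8*A - 9*A^4))^2 - 1728*(-15 + 24*A + 72*A^3 - 27*A^4 - 54*A^6) - 1728*((1 + 8*A - 9*A^4))^3 - 432*((-15 + 24*A + 72*A^3 - 27*A^4 - 54*A^6))^2 + 2592*((1 + 8*A - 9*A^4))*((-15 + 24*A + 72*A^3 - 27*A^4 - 54*A^6)) = -110592*(-1*A^3 + 1)"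
proof -
  have x2: "((1 + 8*A - 9*A^4))^2 = (1 + 16*A + 64*A^2 - 18*A^4 - 144*A^5 + 81*A^8)" by (simp add: eval_nat_numeral algebra_simps)
  have x3: "((1 + 8*A - 9*A^4))^3 = (1 + 16*A + 64*A^2 - 18*A^4 - 144*A^5 + 81*A^8) * ((1 + 8*A - 9*A^4))" by (simp add: eval_nat_numeral algebra_simps)
  have x3': "(1 + 16*A + 64*A^2 - 18*A^4 - 144*A^5 + 81*A^8) * ((1 + 8*A - 9*A^4)) = (1 + 24*A + 192*A^2 + 512*A^3 - 27*A^4 - 432*A^5 - 1728*A^6 + 243*A^8 + 1944*A^9 - 729*A^12)" by (simp add: eval_nat_numeral algebra_simps)
  have y2: "((-15 + 24*A + 72*A^3 - 27*A^4 - 54*A^6))^2 = (225 - 720*A + 576*A^2 - 2160*A^3 + 4266*A^4 - 1296*A^5 + 6804*A^6 - 6480*A^7 + 729*A^8 - 7776*A^9 + 2916*A^10 + 2916*A^12)" by (simp add: eval_nat_numeral algebra_simps)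
  have xy: "((1 + 8*A - 9*A^4))*((-15 + 24*A + 72*A^3 - 27*A^4 - 54*A^6)) = (-15 - 96*A + 192*A^2 + 72*A^3 + 684*A^4 - 432*A^5 - 54*A^6 - 1080*A^7 + 243*A^8 + 486*A^10)" by (simp add: eval_nat_numeral algebra_simps)
  show ?thesis unfolding x2 x3 x3' y2 xy by (simp add: eval_nat_numeral algebra_simps)
qed

lemma disc_HJ_p: fixes N :: int
  shows "1296*(Hh (1) N)^2 - 1728*(Jj (1) N) - 1728*(Hh (1) N)^3 - 432*(Jj (1) N)^2 + 2592*(Hh (1) N)*(Jj (1) N) = -110592*((1)*(AA (1) N)^3 + 1)"
proof -
  have hx: "Hh (1) N = (1 - 8*(AA (1) N) - 9*(AA (1) N)^4)" by (simp add: Hh_def)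
  have jy: "Jj (1) N = (-15 - 24*(AA (1) N) - 72*(AA (1) N)^3 - 27*(AA (1) N)^4 - 54*(AA (1) N)^6)" by (simp add: Jj_def)
  show ?thesis unfolding hx jy by (rule disc_A_p)
qed

lemma disc_HJ_m: fixes N :: int
  shows "1296*(Hh (-1) N)^2 - 1728*(Jj (-1) N) - 1728*(Hh (-1) N)^3 - 432*(Jj (-1) N)^2 + 2592*(Hh (-1) N)*(Jj (-1) N) = -110592*((-1)*(AA (-1) N)^3 + 1)"
proof -
  have hx: "Hh (-1) N = (1 + 8*(AA (-1) N) - 9*(AA (-1) N)^4)" by (simp add: Hh_def)
  have jy: "Jj (-1) N = (-15 + 24*(AA (-1) N) + 72*(AA (-1) N)^3 - 27*(AA (-1) N)^4 - 54*(AA (-1) N)^6)" by (simp add: Jj_def)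
  show ?thesis unfolding hx jy by (rule disc_A_m)
qed
lemma exist_hj:
  fixes e N :: int assumes e: "e = 1 \<or> e = -1"
  shows "\<exists>h j. 48*h = Hh e N \<and> 1728*j = Jj e N \<and> even (h - j)"
proof -
  define q where "q = N div 4"
  have N: "N = 4*q + N mod 4" unfolding q_def by simp
  have "N mod 4 = 0 \<or> N mod 4 = 1 \<or> N mod 4 = 2 \<or> N mod 4 = 3" by presburger
  then consider "N = 4*q + 0" | "N = 4*q + 1" | "N = 4*q + 2" | "N = 4*q + 3" using N by force
  note c = this
  from e show ?thesis
  proof
    assume e1: "e = 1"
    show ?thesis unfolding e1 using c hj_p_0 hj_p_1 hj_p_2 hj_p_3 by metis
  next
    assume e1: "e = -1"
    show ?thesis unfolding e1 using c hj_m_0 hj_m_1 hj_m_2 hj_m_3 by metis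
  qed
qed

lemma H_gen: fixes A \<epsilon> :: rat assumes "\<epsilon> = 1 \<or> \<epsilon> = -1"
  shows "48 * ((2*A*(4*\<epsilon>/9)*(-3) + 2*A^2*(-3)*(1/3 + A^2) + 3*(1/3+A^2)^2)/16) = -(9*A^4 + 8*\<epsilon>*A - 1)"
  using assms by (elim disjE) (simp_all add: field_simps eval_nat_numeral algebra_simps)

lemma J_gen: fixes A \<epsilon> :: rat assumes "\<epsilon> = 1 \<or> \<epsilon> = -1"
  shows "1728 * (((4*\<epsilon>/9)^2*(-3) + 2*A*(4*\<epsilon>/9)*(-3)*(1/3 + A^2) + A^2*(-3)*(1/3 + A^2)^2 + (1/3 + A^2)^3)/64)
     = -(54*A^6 + 27*A^4 + 72*\<epsilon>*A^3 + 24*\<epsilon>*A + 15)"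
  using assms by (elim disjE) (simp_all add: field_simps eval_nat_numeral algebra_simps)

lemma HJ_rat:
  fixes e m n :: int assumes e: "e = 1 \<or> e = -1"
  shows "48 * H_mn e m n = of_int (Hh e (m + 24*n))" "1728 * J_mn e m n = of_int (Jj e (m + 24*n))"
proof -
  have A: "A_mn e m n = of_int (AA e (m + 24*n))" by (simp add: A_mn_def AA_def)
  have e': "(of_int e :: rat) = 1 \<or> of_int e = -1" using e by auto
  show "48 * H_mn e m n = of_int (Hh e (m + 24*n))"
    unfolding H_mn_def Let_def B_e_def D_c_def r_mn_def A Hh_def
    using H_gen[OF e', of "of_int (AA e (m + 24*n))"] by simp
  show "1728 * J_mn e m n = of_int (Jj e (m + 24*n))"
    unfolding J_mn_def Let_def B_e_def D_c_def r_mn_def A Jj_def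
    using J_gen[OF e', of "of_int (AA e (m + 24*n))"] by simp
qed

lemma disc_M:
  fixes e N h j :: int
  assumes e: "e = 1 \<or> e = -1" and h: "48*h = Hh e N" and j: "1728*j = Jj e N"
  shows "wm_disc (1,0,0,h,j) = -2*e*N*(108*N^2 - 18*e*N + 1)"
proof -
  have "(1728::int)^2 * wm_disc (1,0,0,h,j) = 1296*(48*h)^2 - 1728*(1728*j) - 1728*(48*h)^3
       - 432*(1728*j)^2 + 2592*(48*h)*(1728*j)"
    by (simp add: wm_disc_def eval_nat_numeral algebra_simps)
  also have "\<dots> = 1296*(Hh e N)^2 - 1728*(Jj e N) - 1728*(Hh e N)^3
       - 432*(Jj e N)^2 + 2592*(Hh e N)*(Jj e N)" by (simp only: h j)
  also have "\<dots> = -110592*(e*(AA e N)^3 + 1)"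
  proof (cases "e = 1")
    case True
    then show ?thesis using disc_HJ_p[of N] by simp
  next
    case False
    hence "e = -1" using e by simp
    then show ?thesis using disc_HJ_m[of N] by simp
  qed
  also have "\<dots> = 1728^2 * (-2*e*N*(108*N^2 - 18*e*N + 1))"
    using e by (elim disjE) (simp_all add: AA_def eval_nat_numeral algebra_simps)
  finally have X: "(1728::int)^2 * wm_disc (1,0,0,h,j) = 1728^2 * (-2*e*N*(108*N^2 - 18*e*N + 1))" .
  have nz: "(1728::int)^2 \<noteq> 0" by simp
  show ?thesis using X unfolding mult_left_cancel[OF nz] .
qed

lemma c4_M: "wm_c4 ((1,0,0,h,j) :: int wm) = 1 - 48*h"
  by (simp add: wm_c4_def)

lemma id_c4f: fixes e N :: int assumes "e = 1 \<or> e = -1"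
  shows "1 - Hh e N = (108*N^2 - 18*e*N + 1)*(8748*N^2 - 486*e*N + 1) - 108*N^2"
  using assms by (elim disjE) (simp_all add: Hh_def AA_def eval_nat_numeral algebra_simps)

lemma id_R1: fixes e N :: int assumes "e = 1 \<or> e = -1"
  shows "27*(-(6*e*N-1))^2 + 54*(6*e*N-1)*(-(6*e*N-1)) - 27*(6*e*N-1)^3 - 9*(Hh e N)*(6*e*N-1) - Jj e N
    = (108*N^2 - 18*e*N + 1)*(918*e*N + 78732*N^2 - 2361960*e*N^3 + 17006112*N^4)"
  using assms by (elim disjE) (simp_all add: Hh_def Jj_def AA_def eval_nat_numeral algebra_simps)

lemma id_R2: fixes e N :: int assumes "e = 1 \<or> e = -1"
  shows "6*(-(6*e*N-1)) - 9*(6*e*N-1)^2 - Hh e N = (108*N^2 - 18*e*N + 1)*(-3 - 486*e*N + 8748*N^2)"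
  using assms by (elim disjE) (simp_all add: Hh_def AA_def eval_nat_numeral algebra_simps)

lemma id_w: fixes e N T :: int assumes "e = 1 \<or> e = -1"
  shows "(2*T+1)^2 - 1 - 3*(6*e*N - 1) = (2*T+1)^2 + 3*(6*N-e)^2 - (108*N^2 - 18*e*N + 1)"
  using assms by (elim disjE) (simp_all add: eval_nat_numeral algebra_simps)

lemma id_fw: fixes e N :: int assumes "e = 1 \<or> e = -1"
  shows "108*N^2 - 18*e*N + 1 = 3*(6*N-e)^2 + 3*e*(6*N-e) + 1"
  using assms by (elim disjE) (simp_all add: eval_nat_numeral algebra_simps)

lemma Hh0: fixes e :: int assumes "e = 1 \<or> e = -1" shows "Hh e 0 = 0" "Jj e 0 = 0"
  using assms by (auto simp: Hh_def Jj_def AA_def)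

lemma cong_neg: fixes a b k :: int shows "[a = b] (mod k) \<Longrightarrow> [-a = -b] (mod k)"
  using cong_minus_minus_iff by blast

lemma cong_Hh: fixes e N N' k :: int assumes "[N = N'] (mod k)"
  shows "[Hh e N = Hh e N'] (mod k)" "[Jj e N = Jj e N'] (mod k)"
  unfolding Hh_def Jj_def AA_def
  by (intro cong_neg cong_add cong_diff cong_mult cong_pow cong_refl assms)+

lemma coprime_23:
  fixes l :: nat assumes l: "prime l" and "l \<noteq> 2" "l \<noteq> 3"
  shows "coprime (int l) (2^a * 3^b)"
proof -
  have pl: "prime (int l)" using l by simp
  have n2: "\<not> int l dvd 2"
  proof
    assume "int l dvd 2"
    hence "l dvd 2" using int_dvd_int_iff[of l 2] by simp
    hence "l \<le> 2" by (rule dvd_imp_le) simp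
    thus False using assms prime_ge_2_nat[OF l] by linarith
  qed
  have n3: "\<not> int l dvd 3"
  proof
    assume "int l dvd 3"
    hence d: "l dvd 3" using int_dvd_int_iff[of l 3] by simp
    hence "l \<le> 3" by (rule dvd_imp_le) simp
    hence "l = 2 \<or> l = 3" using prime_ge_2_nat[OF l] by linarith
    thus False using assms by auto
  qed
  have "coprime (int l) 2" using prime_imp_coprime[OF pl n2] .
  moreover have "coprime (int l) 3" using prime_imp_coprime[OF pl n3] .
  ultimately show ?thesis by simp
qed

lemma cong_cancel23:
  fixes l :: nat and x :: int assumes l: "prime l" and "l \<noteq> 2" "l \<noteq> 3"
    and "[2^a * 3^b * x = 0] (mod int l)"
  shows "[x = 0] (mod int l)"
proof -
  have "coprime (2^a * 3^b) (int l)" using coprime_23[OF assms(1-3)] coprime_commute by blast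
  moreover have "[2^a * 3^b * x = 2^a * 3^b * 0] (mod int l)" using assms(4) by simp
  ultimately show ?thesis using cong_mult_lcancel by blast
qed
lemma split_qr:
  fixes p :: nat assumes p: "prime p" and p1: "[p = 1] (mod 3)"
  shows "\<exists>s::int. [s^2 = -3] (mod int p)"
proof -
  obtain g where g: "residue_primroot p g" using prime_primitive_root_exists p prime_gt_1_nat by blast
  have ordg: "ord p g = p - 1" using g p by (simp add: residue_primroot_def totient_prime)
  have p2: "p \<ge> 2" using prime_ge_2_nat[OF p] .
  from p1 have "p mod 3 = 1" by (simp add: cong_def)
  then obtain k where k: "p - 1 = 3 * k" using p2
    by (intro that[of "(p - 1) div 3"]) presburger
  have kpos: "k > 0" using k p2 by auto
  have "[g ^ (p - 1) = 1] (mod p)" using ord_divides'[of g "p - 1" p] ordg by simp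
  hence "[(g ^ k) ^ 3 = 1] (mod p)" using k by (simp add: power_mult[symmetric] mult.commute)
  hence w3: "[(int g ^ k) ^ 3 = 1] (mod int p)"
    by (metis cong_int_iff of_nat_1 of_nat_power)
  have "\<not> [g ^ k = 1] (mod p)"
  proof
    assume "[g ^ k = 1] (mod p)"
    hence "ord p g dvd k" using ord_divides'[of g k p] by simp
    with ordg k kpos show False by (auto dest: dvd_imp_le)
  qed
  hence w1: "\<not> [int g ^ k = 1] (mod int p)"
    by (metis cong_int_iff of_nat_1 of_nat_power)
  define w where "w = int g ^ k"
  have pp: "prime (int p)" using p by simp
  have "int p dvd (w - 1) * (w^2 + w + 1)"
  proof -
    have "(w - 1) * (w^2 + w + 1) = w^3 - 1" by (simp add: algebra_simps eval_nat_numeral)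
    thus ?thesis using w3 unfolding w_def by (simp add: cong_iff_dvd_diff)
  qed
  moreover have "\<not> int p dvd (w - 1)" using w1 unfolding w_def by (simp add: cong_iff_dvd_diff)
  ultimately have d: "int p dvd (w^2 + w + 1)" using pp prime_dvd_mult_iff by blast
  have e: "(2*w+1)^2 - (-3) = 4 * (w^2 + w + 1)" by (simp add: algebra_simps eval_nat_numeral)
  have "int p dvd (2*w+1)^2 - (-3)" unfolding e by (rule dvd_mult[OF d])
  hence "[(2*w+1)^2 = -3] (mod int p)" by (simp only: cong_iff_dvd_diff)
  thus ?thesis by blast
qed

lemma nonsplit_qr:
  fixes p :: nat assumes p: "prime p" and p2: "[p = 2] (mod 3)" and pn2: "p \<noteq> 2"
  shows "\<not> [s^2 = -3] (mod int p)"
proof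
  assume s: "[s^2 = -3] (mod int p)"
  have pp: "prime (int p)" using p by simp
  have "\<not> int p dvd 2"
  proof
    assume "int p dvd 2"
    hence "p dvd 2" using int_dvd_int_iff[of p 2] by simp
    hence "p \<le> 2" by (rule dvd_imp_le) simp
    thus False using pn2 prime_ge_2_nat[OF p] by linarith
  qed
  hence cop2: "coprime 2 (int p)" using prime_imp_coprime[OF pp] coprime_commute by blast
  obtain x where x: "[2 * x = 1] (mod int p)" using cong_solve_coprime_int[OF cop2] by blast
  define w where "w = x * (s - 1)"
  have "[2 * w = 1 * (s - 1)] (mod int p)" unfolding w_def using cong_scalar_right[OF x, of "s-1"] by (simp add: ac_simps)
  hence "[2 * w + 1 = s] (mod int p)" using cong_add[of "2*w" "s-1" "int p" 1 1] by simp
  hence "[(2 * w + 1)^2 + 3 = s^2 + 3] (mod int p)" by (intro cong_add cong_pow cong_refl)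
  moreover have "[s^2 + 3 = -3 + 3] (mod int p)" using s by (intro cong_add cong_refl)
  ultimately have "[(2 * w + 1)^2 + 3 = 0] (mod int p)" using cong_trans by simp
  moreover have "(2 * w + 1)^2 + 3 = 4 * (w^2 + w + 1)" by (simp add: algebra_simps eval_nat_numeral)
  ultimately have "[4 * (w^2 + w + 1) = 4 * 0] (mod int p)" by simp
  moreover have "coprime 4 (int p)" using cop2
    using coprime_mult_left_iff[of 2 2 "int p"] by simp
  ultimately have q: "[w^2 + w + 1 = 0] (mod int p)" using cong_mult_lcancel by blast
  hence dq: "int p dvd w^2 + w + 1" by (simp add: cong_0_iff)
  have "w^3 - 1 = (w - 1) * (w^2 + w + 1)" by (simp add: algebra_simps eval_nat_numeral)
  hence w3: "[w^3 = 1] (mod int p)" using dq by (simp add: cong_iff_dvd_diff)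
  have nd: "\<not> int p dvd w"
  proof
    assume "int p dvd w"
    hence "int p dvd w^2 + w" by (simp add: power2_eq_square)
    with dq have "int p dvd 1" by (metis dvd_add_right_iff add.assoc)
    thus False using pp by (simp add: prime_int_iff)
  qed
  define w' where "w' = nat (w mod int p)"
  have p0: "int p > 0" using p prime_gt_0_nat by simp
  have ww: "int w' = w mod int p" unfolding w'_def using p0 by simp
  have wc: "[int w' = w] (mod int p)" using ww by (simp add: cong_def)
  have "\<not> p dvd w'"
  proof
    assume "p dvd w'"
    hence "int p dvd int w'" by simp
    hence "int p dvd w" using wc cong_dvd_iff by blast
    with nd show False by simp
  qed
  hence "[w' ^ (p - 1) = 1] (mod p)" using fermat_theorem[OF p] by blast
  hence "[int w' ^ (p - 1) = 1] (mod int p)" by (metis cong_int_iff of_nat_1 of_nat_power)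
  hence f: "[w ^ (p - 1) = 1] (mod int p)" using wc by (meson cong_pow cong_sym cong_trans)
  from p2 have "p mod 3 = 2" by (simp add: cong_def)
  then obtain k where k: "p - 1 = 3 * k + 1" using prime_ge_2_nat[OF p]
    by (intro that[of "(p - 1) div 3"]) presburger
  have "w ^ (p - 1) = (w^3)^k * w" using k by (simp add: power_mult power_add)
  moreover have "[(w^3)^k * w = 1^k * w] (mod int p)" using w3 by (intro cong_mult cong_pow cong_refl)
  ultimately have "[w = 1] (mod int p)" using f by (metis cong_sym cong_trans power_one mult_1)
  hence "[w^2 + w + 1 = 1^2 + 1 + 1] (mod int p)" by (intro cong_add cong_pow cong_refl)
  hence h3: "[w^2 + w + 1 = 3] (mod int p)" by simp
  have "[3 = 0] (mod int p)" using cong_trans[OF cong_sym[OF h3] q] .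
  hence "int p dvd 3" by (simp add: cong_0_iff)
  hence "p dvd 3" using int_dvd_int_iff[of p 3] by simp
  hence "p \<le> 3" by (rule dvd_imp_le) simp
  moreover have "p \<noteq> 2" using pn2 .
  ultimately have "p = 3" using prime_ge_2_nat[OF p] by linarith
  with p2 show False by (simp add: cong_def)
qed
lemma cp1: fixes X Y a b H J k :: int
  assumes hX: "[X = a] (mod k)" and hY: "[Y = b] (mod k)"
  shows "[27*Y^2 + 54*X*Y - 27*X^3 - 9*H*X - J = 27*b^2 + 54*a*b - 27*a^3 - 9*H*a - J] (mod k)"
  by (intro cong_add cong_diff cong_mult cong_pow cong_refl hX hY)

lemma cp2: fixes X Y a b H k :: int
  assumes hX: "[X = a] (mod k)" and hY: "[Y = b] (mod k)"
  shows "[6*Y - 9*X^2 - H = 6*b - 9*a^2 - H] (mod k)"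
  by (intro cong_add cong_diff cong_mult cong_pow cong_refl hX hY)

lemma cp3: fixes X a T k :: int
  assumes hX: "[X = a] (mod k)"
  shows "[(2*T+1)^2 - 1 - 3*X = (2*T+1)^2 - 1 - 3*a] (mod k)"
  by (intro cong_add cong_diff cong_mult cong_pow cong_refl hX)

lemma cp4: fixes z s w k :: int
  assumes z: "[z = s*w] (mod k)" and s: "[s^2 = -3] (mod k)"
  shows "[z^2 + 3*w^2 = 0] (mod k)"
proof -
  have A: "[z^2 + 3*w^2 = (s*w)^2 + 3*w^2] (mod k)" by (intro cong_add cong_pow cong_refl z)
  have B: "(s*w)^2 + 3*w^2 = s^2*w^2 + 3*w^2" by (simp add: power_mult_distrib)
  have C: "[s^2*w^2 + 3*w^2 = -3*w^2 + 3*w^2] (mod k)" by (intro cong_add cong_mult cong_refl s)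
  have "[z^2 + 3*w^2 = -3*w^2 + 3*w^2] (mod k)" using A C unfolding B by (rule cong_trans)
  thus ?thesis by simp
qed

lemma cp5: fixes z w v k :: int
  assumes a: "[z^2 + 3*w^2 = 0] (mod k)" and v: "[w*v = 1] (mod k)"
  shows "[(z*v)^2 = -3] (mod k)"
proof -
  have "[(z^2 + 3*w^2)*v^2 = 0*v^2] (mod k)" by (intro cong_mult cong_refl a)
  moreover have "(z^2 + 3*w^2)*v^2 = (z*v)^2 + 3*(w*v)^2" by (simp add: algebra_simps power_mult_distrib)
  ultimately have a': "[(z*v)^2 + 3*(w*v)^2 = 0] (mod k)" by simp
  have b: "[(z*v)^2 + 3*(w*v)^2 = (z*v)^2 + 3*1^2] (mod k)" by (intro cong_add cong_mult cong_pow cong_refl v)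
  have "[(z*v)^2 + 3*1^2 = 0] (mod k)" by (rule cong_trans[OF cong_sym[OF b] a'])
  hence "[(z*v)^2 + 3 = 0] (mod k)" by simp
  hence "[(z*v)^2 + 3 - 3 = 0 - 3] (mod k)" by (intro cong_diff cong_refl)
  thus ?thesis by simp
qed

theorem proposition3p4:
  fixes \<epsilon> m :: int and n l :: nat
  assumes "\<epsilon> \<in> {1, -1}"
    and "m \<in> {1,2,5,7,8,10,11,13,14,16,17,19,22,23}"
    and "squarefree (delta_m \<epsilon> m (int n))"
    and "prime l"
    and "bad_reduction l (E_mn \<epsilon> m (int n))"
  shows "multiplicative_reduction l (E_mn \<epsilon> m (int n)) \<and>
         (l = 2 \<longrightarrow> split_multiplicative_reduction l (E_mn \<epsilon> m (int n))) \<and>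
         (int l dvd m + 24 * int n \<longrightarrow> split_multiplicative_reduction l (E_mn \<epsilon> m (int n))) \<and>
         (int l dvd f_m \<epsilon> m (int n) \<longrightarrow>
            ([l = 1] (mod 3) \<longrightarrow> split_multiplicative_reduction l (E_mn \<epsilon> m (int n))) \<and>
            ([l = 2] (mod 3) \<longrightarrow> nonsplit_multiplicative_reduction l (E_mn \<epsilon> m (int n))))"
proof -
  have e: "\<epsilon> = 1 \<or> \<epsilon> = -1" using assms(1) by auto
  have lp: "prime l" by fact
  define N where "N = m + 24 * int n"
  define E where "E = E_mn \<epsilon> m (int n)"
  define f where "f = f_m \<epsilon> m (int n)"
  have Npos: "N > 0" using assms(2) unfolding N_def by auto
  have N3: "\<not> 3 dvd N" using assms(2) unfolding N_def by (auto; presburger)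
  obtain h j where h: "48*h = Hh \<epsilon> N" and j: "1728*j = Jj \<epsilon> N" and hj2: "even (h - j)"
    using exist_hj[OF e] by blast
  define M :: "int wm" where "M = (1,0,0,h,j)"
  have HR: "48 * H_mn \<epsilon> m (int n) = of_int (Hh \<epsilon> N)" and JR: "1728 * J_mn \<epsilon> m (int n) = of_int (Jj \<epsilon> N)"
    using HJ_rat[OF e, of m "int n"] unfolding N_def by auto
  have Hq: "H_mn \<epsilon> m (int n) = of_int h"
  proof -
    have "48 * H_mn \<epsilon> m (int n) = 48 * of_int h" unfolding HR h[symmetric] by simp
    thus ?thesis by simp
  qed
  have Jq: "J_mn \<epsilon> m (int n) = of_int j"
  proof -
    have "1728 * J_mn \<epsilon> m (int n) = 1728 * of_int j" unfolding JR j[symmetric] by simp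
    thus ?thesis by simp
  qed
  have EM: "E = wm_map of_int M" unfolding E_def E_mn_def M_def by (simp add: Hq Jq)
  have fN: "f = 108*N^2 - 18*\<epsilon>*N + 1" unfolding f_def f_m_def N_def
    by (simp add: algebra_simps power2_eq_square)
  have disc: "wm_disc M = -2*\<epsilon>*N*f" unfolding M_def fN using disc_M[OF e h j] .
  have c4: "wm_c4 M = 1 - Hh \<epsilon> N" unfolding M_def c4_M h ..
  have f6: "f = 6*(18*N^2 - 3*\<epsilon>*N) + 1" unfolding fN by (simp add: algebra_simps)
  have f0: "f \<noteq> 0" using f6 by presburger
  have dne: "wm_disc M \<noteq> 0" unfolding disc using e Npos f0 by auto
  have pl: "prime (int l)" using lp by simp
  have l2: "l \<ge> 2" using prime_ge_2_nat[OF lp] .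
  have nu: "\<not> is_unit (int l)" using pl not_prime_unit by blast
  have ldisc: "int l dvd wm_disc M"
  proof (rule ccontr)
    assume nd: "\<not> int l dvd wm_disc M"
    obtain M0 where min0: "minimal_model_at l E M0" and d0: "int l dvd wm_disc M0"
      using assms(5) unfolding bad_reduction_def E_def by blast
    from min0 have iso0: "wm_iso E (wm_map of_int M0)"
      and le: "\<And>M'. wm_iso E (wm_map of_int M') \<Longrightarrow>
           multiplicity (int l) (wm_disc M0) \<le> multiplicity (int l) (wm_disc M')"
      unfolding minimal_model_at_def by auto
    have "multiplicity (int l) (wm_disc M0) \<le> multiplicity (int l) (wm_disc M)"
      using le[of M] iso_refl[of "wm_map of_int M"] EM by simp
    also have "\<dots> = 0" using nd by (rule not_dvd_imp_multiplicity_0)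
    finally have z: "multiplicity (int l) (wm_disc M0) = 0" by simp
    obtain u where "u \<noteq> 0" "u^12 * wm_disc (wm_map of_int M0) = wm_disc E"
      using iso_inv[OF iso0] by blast
    hence "wm_disc M0 \<noteq> 0" using EM disc_map dne by auto
    hence "multiplicity (int l) (wm_disc M0) > 0"
      using multiplicity_gt_zero_iff[of "wm_disc M0" "int l"] nu d0 by blast
    with z show False by simp
  qed
  have lcases: "l = 2 \<or> int l dvd N \<or> int l dvd f"
  proof -
    have "int l dvd ((-2*\<epsilon>)*N)*f" using ldisc unfolding disc by (simp add: mult.assoc)
    hence "int l dvd -2*\<epsilon> \<or> int l dvd N \<or> int l dvd f" using pl prime_dvd_mult_iff by blast
    moreover have "int l dvd -2*\<epsilon> \<Longrightarrow> l = 2"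
    proof -
      assume "int l dvd -2*\<epsilon>"
      hence "int l dvd 2" using e by auto
      hence "l dvd 2" using int_dvd_int_iff[of l 2] by simp
      hence "l \<le> 2" by (rule dvd_imp_le) simp
      thus "l = 2" using l2 by simp
    qed
    ultimately show ?thesis by blast
  qed
  have fcop: "int l dvd f \<Longrightarrow> \<not> int l dvd 6*N"
  proof
    assume lf: "int l dvd f" and l6: "int l dvd 6*N"
    have "int l dvd (6*N)*(18*N - 3*\<epsilon>)" using l6 by (rule dvd_mult2)
    moreover have "(6*N)*(18*N - 3*\<epsilon>) = 6*(18*N^2 - 3*\<epsilon>*N)" by (simp add: algebra_simps power2_eq_square)
    ultimately have "int l dvd 6*(18*N^2 - 3*\<epsilon>*N)" by simp
    hence "int l dvd f - 6*(18*N^2 - 3*\<epsilon>*N)" using lf by (intro dvd_diff)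
    moreover have "f - 6*(18*N^2 - 3*\<epsilon>*N) = 1" using f6 by simp
    ultimately have "int l dvd 1" by simp
    thus False using nu by simp
  qed
  have Acong: "int l dvd N \<Longrightarrow> [Hh \<epsilon> N = 0] (mod int l) \<and> [Jj \<epsilon> N = 0] (mod int l)"
  proof -
    assume "int l dvd N"
    hence c: "[N = 0] (mod int l)" by (simp add: cong_0_iff)
    show ?thesis using cong_Hh[OF c, of \<epsilon>] Hh0[OF e] by simp
  qed
  have nc: "\<not> int l dvd wm_c4 M"
  proof
    assume lc: "int l dvd wm_c4 M"
    from lcases show False
    proof (elim disjE)
      assume l2: "l = 2"
      have "odd (AA \<epsilon> N)" using e unfolding AA_def by auto
      hence "odd (9*(AA \<epsilon> N)^4 + 8*\<epsilon>*(AA \<epsilon> N))" by simp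
      moreover have "wm_c4 M = 9*(AA \<epsilon> N)^4 + 8*\<epsilon>*(AA \<epsilon> N)" unfolding c4 Hh_def by simp
      ultimately show False using lc l2 by simp
    next
      assume lN: "int l dvd N"
      hence "[Hh \<epsilon> N = 0] (mod int l)" using Acong by blast
      hence "[1 - Hh \<epsilon> N = 1 - 0] (mod int l)" by (intro cong_diff cong_refl)
      hence "[wm_c4 M = 1] (mod int l)" unfolding c4 by simp
      hence "int l dvd 1" using lc by (simp add: cong_dvd_iff)
      thus False using nu by simp
    next
      assume lf: "int l dvd f"
      have ceq: "wm_c4 M = f*(8748*N^2 - 486*\<epsilon>*N + 1) - 108*N^2" unfolding c4 fN using id_c4f[OF e] .
      have "int l dvd f*(8748*N^2 - 486*\<epsilon>*N + 1)" using lf by (rule dvd_mult2)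
      hence "int l dvd f*(8748*N^2 - 486*\<epsilon>*N + 1) - wm_c4 M" using lc by (rule dvd_diff)
      moreover have "f*(8748*N^2 - 486*\<epsilon>*N + 1) - wm_c4 M = 3*((6*N)*(6*N))"
        unfolding ceq by (simp add: power2_eq_square)
      ultimately have "int l dvd 3*((6*N)*(6*N))" by simp
      hence "int l dvd 3 \<or> int l dvd (6*N)*(6*N)" using pl prime_dvd_mult_iff by blast
      hence "int l dvd 3 \<or> int l dvd 6*N" using pl prime_dvd_mult_iff by blast
      moreover have "int l dvd 3 \<Longrightarrow> int l dvd 6*N" using dvd_trans[of "int l" 3 "6*N"] by simp
      ultimately show False using fcop[OF lf] by blast
    qed
  qed
  have minM: "minimal_model_at l E M" by (rule minimal_of[OF lp EM nc dne])
  have MR: "multiplicative_reduction l E"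
    unfolding multiplicative_reduction_def using minM ldisc nc by blast
  have S2: "l = 2 \<Longrightarrow> split_multiplicative_reduction l E"
  proof -
    assume leq2: "l = 2"
    have "even (h*(h - 1) + (h - j))" using hj2 by simp
    moreover have "h*(h - 1) + (h - j) = h^2 + 1*0*h + 0*h - 0^3 - 0*0^2 - h*0 - j"
      by (simp add: algebra_simps power2_eq_square)
    ultimately have c1: "[h^2 + 1*0*h + 0*h - 0^3 - 0*0^2 - h*0 - j = 0] (mod int l)"
      by (simp add: leq2 cong_0_iff)
    have c2: "[1*h - 3*0^2 - 2*0*0 - h = 0] (mod int l)" by simp
    have c3: "[2*h + 1*0 + 0 = 0] (mod int l)" by (simp add: leq2 cong_0_iff)
    have sp: "singular_point_mod l M 0 h" unfolding M_def singular_point_mod.simps using c1 c2 c3 by blast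
    have "[0^2 + 1*0 - (3*0 + 0) = (0::int)] (mod int l)" by simp
    hence rt: "rational_tangents_mod l M 0" unfolding M_def rational_tangents_mod.simps by blast
    show ?thesis unfolding split_multiplicative_reduction_def using minM ldisc nc sp rt by blast
  qed
  have SN: "int l dvd N \<Longrightarrow> split_multiplicative_reduction l E"
  proof -
    assume lN: "int l dvd N"
    show ?thesis
    proof (cases "l = 2")
      case True thus ?thesis using S2 by blast
    next
      case ln2: False
      have ln3: "l \<noteq> 3" using lN N3 by auto
      have "[Hh \<epsilon> N = 0] (mod int l)" "[Jj \<epsilon> N = 0] (mod int l)" using Acong lN by blast+
      hence "[2^4 * 3^1 * h = 0] (mod int l)" "[2^6 * 3^3 * j = 0] (mod int l)" using h j by simp_all
      hence h0: "[h = 0] (mod int l)" and j0: "[j = 0] (mod int l)"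
        using cong_cancel23[OF lp ln2 ln3] by blast+
      have c1: "[0^2 + 1*0*0 + 0*0 - 0^3 - 0*0^2 - h*0 - j = 0] (mod int l)"
        using j0 cong_neg[OF j0] by simp
      have c2: "[1*0 - 3*0^2 - 2*0*0 - h = 0] (mod int l)" using cong_neg[OF h0] by simp
      have c3: "[2*0 + 1*0 + 0 = (0::int)] (mod int l)" by simp
      have sp: "singular_point_mod l M 0 0" unfolding M_def singular_point_mod.simps using c1 c2 c3 by blast
      have "[0^2 + 1*0 - (3*0 + 0) = (0::int)] (mod int l)" by simp
      hence rt: "rational_tangents_mod l M 0" unfolding M_def rational_tangents_mod.simps by blast
      show ?thesis unfolding split_multiplicative_reduction_def using minM ldisc nc sp rt by blast
    qed
  qed
  have SF: "int l dvd f \<Longrightarrow> ([l = 1] (mod 3) \<longrightarrow> split_multiplicative_reduction l E) \<and>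
            ([l = 2] (mod 3) \<longrightarrow> nonsplit_multiplicative_reduction l E)"
  proof -
    assume lf: "int l dvd f"
    have n6: "\<not> int l dvd 6*N" using fcop[OF lf] .
    have ln2: "l \<noteq> 2"
    proof
      assume "l = 2" hence "int l dvd 6*N" by simp
      with n6 show False by simp
    qed
    have ln3: "l \<noteq> 3"
    proof
      assume "l = 3" hence "int l dvd 6*N" by simp
      with n6 show False by simp
    qed
    have f0c: "[f = 0] (mod int l)" using lf by (simp add: cong_0_iff)
    have cop2: "coprime 2 (int l)" using coprime_23[OF lp ln2 ln3, of 1 0] coprime_commute by simp
    obtain i2 where i2: "[2*i2 = 1] (mod int l)" using cong_solve_coprime_int[OF cop2] by blast
    define x0 where "x0 = i2*i2*(6*\<epsilon>*N - 1)"
    define y0 where "y0 = -(x0*i2)"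
    have hX: "[4*x0 = 6*\<epsilon>*N - 1] (mod int l)"
    proof -
      have A: "4*x0 = (2*i2)*(2*i2)*(6*\<epsilon>*N - 1)" unfolding x0_def by (simp add: algebra_simps)
      have B: "[(2*i2)*(2*i2)*(6*\<epsilon>*N - 1) = 1*1*(6*\<epsilon>*N - 1)] (mod int l)"
        by (intro cong_mult cong_refl i2)
      show ?thesis using B unfolding A[symmetric] by simp
    qed
    have hY': "[2*y0 = -x0] (mod int l)"
    proof -
      have A: "2*y0 = -(x0*(2*i2))" unfolding y0_def by (simp add: algebra_simps)
      have B: "[-(x0*(2*i2)) = -(x0*1)] (mod int l)" by (intro cong_neg cong_mult cong_refl i2)
      show ?thesis using B unfolding A[symmetric] by simp
    qed
    have hY: "[8*y0 = -(6*\<epsilon>*N - 1)] (mod int l)"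
    proof -
      have "[4*(2*y0) = 4*(-x0)] (mod int l)" by (intro cong_mult cong_refl hY')
      hence "[8*y0 = -(4*x0)] (mod int l)" by simp
      moreover have "[-(4*x0) = -(6*\<epsilon>*N - 1)] (mod int l)" by (intro cong_neg hX)
      ultimately show ?thesis by (rule cong_trans)
    qed
    have c1: "[y0^2 + 1*x0*y0 + 0*y0 - x0^3 - 0*x0^2 - h*x0 - j = 0] (mod int l)"
    proof -
      have E1: "2^6 * 3^3 * (y0^2 + 1*x0*y0 + 0*y0 - x0^3 - 0*x0^2 - h*x0 - j)
          = 27*(8*y0)^2 + 54*(4*x0)*(8*y0) - 27*(4*x0)^3 - 9*(Hh \<epsilon> N)*(4*x0) - Jj \<epsilon> N"
        unfolding h[symmetric] j[symmetric] by (simp add: algebra_simps eval_nat_numeral)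
      have E2: "[27*(8*y0)^2 + 54*(4*x0)*(8*y0) - 27*(4*x0)^3 - 9*(Hh \<epsilon> N)*(4*x0) - Jj \<epsilon> N
           = 27*(-(6*\<epsilon>*N-1))^2 + 54*(6*\<epsilon>*N-1)*(-(6*\<epsilon>*N-1)) - 27*(6*\<epsilon>*N-1)^3
           - 9*(Hh \<epsilon> N)*(6*\<epsilon>*N-1) - Jj \<epsilon> N] (mod int l)"
        by (rule cp1[OF hX hY])
      have E3: "27*(-(6*\<epsilon>*N-1))^2 + 54*(6*\<epsilon>*N-1)*(-(6*\<epsilon>*N-1)) - 27*(6*\<epsilon>*N-1)^3
           - 9*(Hh \<epsilon> N)*(6*\<epsilon>*N-1) - Jj \<epsilon> N
           = f*(918*\<epsilon>*N + 78732*N^2 - 2361960*\<epsilon>*N^3 + 17006112*N^4)"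
        unfolding fN by (rule id_R1[OF e])
      have E4: "[f*(918*\<epsilon>*N + 78732*N^2 - 2361960*\<epsilon>*N^3 + 17006112*N^4) = 0] (mod int l)"
        using dvd_mult2[OF lf] by (simp add: cong_0_iff)
      have "[2^6 * 3^3 * (y0^2 + 1*x0*y0 + 0*y0 - x0^3 - 0*x0^2 - h*x0 - j) = 0] (mod int l)"
        using E2 E4 unfolding E1 E3 by (rule cong_trans)
      thus ?thesis using cong_cancel23[OF lp ln2 ln3] by blast
    qed
    have c2: "[1*y0 - 3*x0^2 - 2*0*x0 - h = 0] (mod int l)"
    proof -
      have E1: "2^4 * 3^1 * (1*y0 - 3*x0^2 - 2*0*x0 - h) = 6*(8*y0) - 9*(4*x0)^2 - Hh \<epsilon> N"
        unfolding h[symmetric] by (simp add: algebra_simps eval_nat_numeral)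
      have E2: "[6*(8*y0) - 9*(4*x0)^2 - Hh \<epsilon> N = 6*(-(6*\<epsilon>*N-1)) - 9*(6*\<epsilon>*N-1)^2 - Hh \<epsilon> N] (mod int l)"
        by (rule cp2[OF hX hY])
      have E3: "6*(-(6*\<epsilon>*N-1)) - 9*(6*\<epsilon>*N-1)^2 - Hh \<epsilon> N = f*(-3 - 486*\<epsilon>*N + 8748*N^2)"
        unfolding fN by (rule id_R2[OF e])
      have E4: "[f*(-3 - 486*\<epsilon>*N + 8748*N^2) = 0] (mod int l)"
        using dvd_mult2[OF lf] by (simp add: cong_0_iff)
      have "[2^4 * 3^1 * (1*y0 - 3*x0^2 - 2*0*x0 - h) = 0] (mod int l)"
        using E2 E4 unfolding E1 E3 by (rule cong_trans)
      thus ?thesis using cong_cancel23[OF lp ln2 ln3] by blast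
    qed
    have c3: "[2*y0 + 1*x0 + 0 = 0] (mod int l)"
    proof -
      have "[2*y0 + x0 = -x0 + x0] (mod int l)" by (intro cong_add cong_refl hY')
      thus ?thesis by simp
    qed
    have sp: "singular_point_mod l M x0 y0" unfolding M_def singular_point_mod.simps using c1 c2 c3 by blast
    define w where "w = 6*N - \<epsilon>"
    have tang: "\<And>T. [2^2 * 3^0 * (T^2 + 1*T - (3*x0 + 0)) = (2*T+1)^2 + 3*w^2] (mod int l)"
    proof -
      fix T
      have E1: "2^2 * 3^0 * (T^2 + 1*T - (3*x0 + 0)) = (2*T+1)^2 - 1 - 3*(4*x0)"
        by (simp add: algebra_simps eval_nat_numeral)
      have E2: "[(2*T+1)^2 - 1 - 3*(4*x0) = (2*T+1)^2 - 1 - 3*(6*\<epsilon>*N - 1)] (mod int l)"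
        by (rule cp3[OF hX])
      have E3: "(2*T+1)^2 - 1 - 3*(6*\<epsilon>*N - 1) = (2*T+1)^2 + 3*w^2 - f" unfolding fN w_def by (rule id_w[OF e])
      have E4: "[(2*T+1)^2 + 3*w^2 - f = (2*T+1)^2 + 3*w^2 - 0] (mod int l)" by (intro cong_diff cong_refl f0c)
      have "[2^2 * 3^0 * (T^2 + 1*T - (3*x0 + 0)) = (2*T+1)^2 + 3*w^2 - 0] (mod int l)"
        using E2 E4 unfolding E1 E3 by (rule cong_trans)
      thus "[2^2 * 3^0 * (T^2 + 1*T - (3*x0 + 0)) = (2*T+1)^2 + 3*w^2] (mod int l)" by simp
    qed
    have split: "[l = 1] (mod 3) \<longrightarrow> split_multiplicative_reduction l E"
    proof
      assume l1: "[l = 1] (mod 3)"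
      obtain s where s: "[s^2 = -3] (mod int l)" using split_qr[OF lp l1] by blast
      define T where "T = i2*(s*w - 1)"
      have "[2*T = 1*(s*w - 1)] (mod int l)" unfolding T_def
        using cong_mult[OF i2 cong_refl[of "s*w - 1"]] by (simp add: algebra_simps)
      hence "[2*T + 1 = (s*w - 1) + 1] (mod int l)" by (intro cong_add cong_refl) simp
      hence t1: "[2*T + 1 = s*w] (mod int l)" by simp
      have "[(2*T+1)^2 + 3*w^2 = 0] (mod int l)" by (rule cp4[OF t1 s])
      hence "[2^2 * 3^0 * (T^2 + 1*T - (3*x0 + 0)) = 0] (mod int l)"
        by (rule cong_trans[OF tang[of T]])
      hence "[T^2 + 1*T - (3*x0 + 0) = 0] (mod int l)" using cong_cancel23[OF lp ln2 ln3] by blast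
      hence rt: "rational_tangents_mod l M x0" unfolding M_def rational_tangents_mod.simps by blast
      show "split_multiplicative_reduction l E"
        unfolding split_multiplicative_reduction_def using minM ldisc nc sp rt by blast
    qed
    have nonsplit: "[l = 2] (mod 3) \<longrightarrow> nonsplit_multiplicative_reduction l E"
    proof
      assume l23: "[l = 2] (mod 3)"
      have nw: "\<not> int l dvd w"
      proof
        assume lw: "int l dvd w"
        have fe: "f = 3*w^2 + 3*\<epsilon>*w + 1" unfolding fN w_def by (rule id_fw[OF e])
        have X: "int l dvd 3*w^2 + 3*\<epsilon>*w"
        proof -
          have "3*w^2 + 3*\<epsilon>*w = w*(3*w + 3*\<epsilon>)" by (simp add: algebra_simps power2_eq_square)
          thus ?thesis using dvd_mult2[OF lw, of "3*w + 3*\<epsilon>"] by simp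
        qed
        have "int l dvd f - (3*w^2 + 3*\<epsilon>*w)" using lf X by (rule dvd_diff)
        moreover have "f - (3*w^2 + 3*\<epsilon>*w) = 1" using fe by simp
        ultimately have "int l dvd 1" by simp
        thus False using nu by simp
      qed
      have copw: "coprime w (int l)" using prime_imp_coprime[OF pl nw] coprime_commute by blast
      obtain v where v: "[w*v = 1] (mod int l)" using cong_solve_coprime_int[OF copw] by blast
      have "\<not> rational_tangents_mod l M x0"
      proof
        assume "rational_tangents_mod l M x0"
        then obtain T where T: "[T^2 + 1*T - (3*x0 + 0) = 0] (mod int l)"
          unfolding M_def rational_tangents_mod.simps by blast
        have a: "[2^2 * 3^0 * (T^2 + 1*T - (3*x0 + 0)) = 2^2 * 3^0 * 0] (mod int l)"
          by (rule cong_mult[OF cong_refl T])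
        have "[(2*T+1)^2 + 3*w^2 = 2^2 * 3^0 * 0] (mod int l)" by (rule cong_trans[OF cong_sym[OF tang[of T]] a])
        hence "[(2*T+1)^2 + 3*w^2 = 0] (mod int l)" by simp
        hence "[((2*T+1)*v)^2 = -3] (mod int l)" by (rule cp5[OF _ v])
        thus False using nonsplit_qr[OF lp l23 ln2] by blast
      qed
      thus "nonsplit_multiplicative_reduction l E"
        unfolding nonsplit_multiplicative_reduction_def using minM ldisc nc sp by blast
    qed
    show ?thesis using split nonsplit by blast
  qed
  have G: "multiplicative_reduction l E \<and> (l = 2 \<longrightarrow> split_multiplicative_reduction l E) \<and>
         (int l dvd N \<longrightarrow> split_multiplicative_reduction l E) \<and>
         (int l dvd f \<longrightarrow> ([l = 1] (mod 3) \<longrightarrow> split_multiplicative_reduction l E) \<and>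
            ([l = 2] (mod 3) \<longrightarrow> nonsplit_multiplicative_reduction l E))"
    using MR S2 SN SF by blast
  show ?thesis using G unfolding E_def N_def f_def .
qed
end
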